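(* Let $\sigma_0>0$. Define $f:2^{[n]}\to\mathbb R$ by $f(S)=\mathbb{E}\max_{i\in[n]}X_i$, where $X_1,\dots,X_n$ are independent, $X_i\sim\mathcal N(0,\sigma_0^2)$ for $i\in S$ and $X_i\equiv0$ for $i\notin S$. Then $f$ is submodular.
   Context: A set function $f:2^{[n]}\to\mathbb R$ is submodular if $f(A\cup\{x\})-f(A)\ge f(B\cup\{x\})-f(B)$ for all $A\subseteq B\subseteq[n]$ and $x\notin B$. *)

theory Defs
  imports "HOL-Probability.Probability"
begin

definition submodular_on :: "'a set \<Rightarrow> ('a set \<Rightarrow> real) \<Rightarrow> bool" where
  "submodular_on V f \<longleftrightarrow>
     (\<forall>A B x. A \<subseteq> B \<longrightarrow> B \<subseteq> V \<longrightarrow> x \<in> V \<longrightarrow> x \<notin> B \<longrightarrow>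
        f (A \<union> {x}) - f A \<ge> f (B \<union> {x}) - f B)"

text \<open>Law of N(0, s^2): density w.r.t. Lebesgue measure (second parameter is std. dev.).\<close>
definition gauss :: "real \<Rightarrow> real measure" where
  "gauss s = density lborel (normal_density 0 s)"

definition gauss_vec :: "nat \<Rightarrow> real \<Rightarrow> nat set \<Rightarrow> (nat \<Rightarrow> real) measure" where
  "gauss_vec n s S = PiM {..<n} (\<lambda>i. if i \<in> S then gauss s else return lborel 0)"

definition exp_max :: "nat \<Rightarrow> real \<Rightarrow> nat set \<Rightarrow> real" where
  "exp_max n s S = (\<integral>x. Max (x ` {..<n}) \<partial>gauss_vec n s S)"

end

theory Submission
  imports Defs
begin

lemma distr_PiM_fun:
  fixes M :: "'i \<Rightarrow> 'a measure" and M' :: "'i \<Rightarrow> 'b measure"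
  assumes fin: "finite I"
  assumes P: "\<And>i. prob_space (M i)"
  assumes f[measurable]: "\<And>i. f i \<in> measurable (M i) (M' i)"
  shows "distr (PiM I M) (PiM I M') (\<lambda>x. \<lambda>i\<in>I. f i (x i)) = PiM I (\<lambda>i. distr (M i) (M' i) (f i))"
proof -
  interpret M: product_prob_space M
    by (intro product_prob_spaceI) (simp add: P)
  define N where "N = (\<lambda>i. distr (M i) (M' i) (f i))"
  interpret N: product_prob_space N
    by (intro product_prob_spaceI) (auto simp: N_def intro: prob_space.prob_space_distr P)
  have meas: "(\<lambda>x. \<lambda>i\<in>I. f i (x i)) \<in> PiM I M \<rightarrow>\<^sub>M PiM I M'"
    by measurable
  have "distr (PiM I M) (PiM I M') (\<lambda>x. \<lambda>i\<in>I. f i (x i)) = PiM I N"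
  proof (rule N.PiM_eqI)
    have N_events_eq: "sets (Pi\<^sub>M I N) = sets (Pi\<^sub>M I M')"
      unfolding N_def by (intro sets_PiM_cong) auto
    then show "sets (distr (Pi\<^sub>M I M) (Pi\<^sub>M I M') (\<lambda>x. \<lambda>i\<in>I. f i (x i))) = sets (Pi\<^sub>M I N)"
      by simp
    fix A assume A: "\<And>i. i \<in> I \<Longrightarrow> A i \<in> sets (N i)"
    have "emeasure (distr (Pi\<^sub>M I M) (Pi\<^sub>M I M') (\<lambda>x. \<lambda>i\<in>I. f i (x i))) (Pi\<^sub>E I A) =
          emeasure (Pi\<^sub>M I M) ((\<lambda>x. \<lambda>i\<in>I. f i (x i)) -` Pi\<^sub>E I A \<inter> space (Pi\<^sub>M I M))"
    proof (intro emeasure_distr meas)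
      show "Pi\<^sub>E I A \<in> sets (Pi\<^sub>M I M')"
        unfolding N_events_eq [symmetric] by (intro sets_PiM_I_finite fin A)
    qed
    also have "(\<lambda>x. \<lambda>i\<in>I. f i (x i)) -` Pi\<^sub>E I A \<inter> space (Pi\<^sub>M I M) = Pi\<^sub>E I (\<lambda>i. f i -` A i \<inter> space (M i))"
      using A by (auto simp: space_PiM PiE_def Pi_def extensional_def N_def)
    also have "emeasure (Pi\<^sub>M I M) (Pi\<^sub>E I (\<lambda>i. f i -` A i \<inter> space (M i))) =
          (\<Prod>i\<in>I. emeasure (M i) (f i -` A i \<inter> space (M i)))"
      using A by (intro M.emeasure_PiM fin) (auto simp: N_def)
    also have "\<dots> = (\<Prod>i\<in>I. emeasure (N i) (A i))"
      using A by (intro prod.cong) (auto simp: N_def emeasure_distr)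
    finally show "emeasure (distr (Pi\<^sub>M I M) (Pi\<^sub>M I M') (\<lambda>x. \<lambda>i\<in>I. f i (x i))) (Pi\<^sub>E I A) = \<dots>" .
  qed fact
  then show ?thesis by (simp add: N_def)
qed


definition HH :: "nat \<Rightarrow> nat set \<Rightarrow> (nat \<Rightarrow> real) \<Rightarrow> real" where
  "HH n T x = Max ((\<lambda>i. if i \<in> T then x i else 0) ` {..<n})"

lemma HH_pointwise:
  fixes x :: "nat \<Rightarrow> real"
  assumes AB: "A \<subseteq> B" and BV: "B \<subseteq> {..<n}" and j: "j < n" "j \<notin> B"
  shows "HH n (B \<union> {j}) x + HH n A x \<le> HH n (A \<union> {j}) x + HH n B x"
proof (cases "A \<union> {j} = {..<n}")
  case True
  then have "B = A" using AB BV j by auto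
  then show ?thesis by simp
next
  case False
  then obtain k where k: "k < n" "k \<notin> A" "k \<noteq> j" using AB BV j by auto
  let ?f = "\<lambda>T i. if i \<in> T then x i else (0::real)"
  have ne: "?f T ` {..<n} \<noteq> {}" for T using j by auto
  have hAB: "HH n A x \<le> HH n B x"
    unfolding HH_def
  proof (rule Max_mono)
    show "?f A ` {..<n} \<subseteq> ?f B ` {..<n}"
    proof
      fix y assume "y \<in> ?f A ` {..<n}"
      then obtain i where i: "i < n" "y = ?f A i" by auto
      show "y \<in> ?f B ` {..<n}"
      proof (cases "i \<in> A")
        case True then show ?thesis using i AB by (auto intro!: image_eqI[where x=i])
      next
        case False then show ?thesis using i j by (auto intro!: image_eqI[where x=j])
      qed
    qed
  qed (use ne in auto)
  have eqA: "?f (A \<union> {j}) ` {..<n} = insert (x j) (?f A ` {..<n})"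
  proof
    show "?f (A \<union> {j}) ` {..<n} \<subseteq> insert (x j) (?f A ` {..<n})" by auto
    show "insert (x j) (?f A ` {..<n}) \<subseteq> ?f (A \<union> {j}) ` {..<n}"
    proof
      fix y assume "y \<in> insert (x j) (?f A ` {..<n})"
      then consider "y = x j" | i where "i < n" "y = ?f A i" by auto
      then show "y \<in> ?f (A \<union> {j}) ` {..<n}"
      proof cases
        case 1 then show ?thesis using j by (auto intro!: image_eqI[where x=j])
      next
        case (2 i)
        show ?thesis
        proof (cases "i \<in> A")
          case True then show ?thesis using 2 by (auto intro!: image_eqI[where x=i])
        next
          case False then show ?thesis using 2 k by (auto intro!: image_eqI[where x=k])
        qed
      qed
    qed
  qed
  have hA: "HH n (A \<union> {j}) x = max (x j) (HH n A x)"
    unfolding HH_def eqA using ne by (simp add: Max_insert)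
  have "HH n (B \<union> {j}) x \<le> Max (insert (x j) (?f B ` {..<n}))"
    unfolding HH_def by (rule Max_mono) (use ne in auto)
  then have hB: "HH n (B \<union> {j}) x \<le> max (x j) (HH n B x)"
    unfolding HH_def using ne by (simp add: Max_insert)
  show ?thesis using hA hB hAB by linarith
qed


lemma gauss_prob: "0 < s \<Longrightarrow> prob_space (gauss s)"
  unfolding gauss_def by (rule prob_space_normal_density)

lemma sets_gauss[simp, measurable_cong]: "sets (gauss s) = sets borel"
  unfolding gauss_def by simp

lemma gauss_vec_distr:
  assumes s: "0 < s"
  shows "gauss_vec n s S = distr (PiM {..<n} (\<lambda>_. gauss s)) (PiM {..<n} (\<lambda>_. lborel))
     (\<lambda>x. \<lambda>i\<in>{..<n}. (if i \<in> S then (\<lambda>y. y) else (\<lambda>_. 0::real)) (x i))"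
proof -
  have m: "(if i \<in> S then (\<lambda>y. y) else (\<lambda>_. 0::real)) \<in> measurable (gauss s) lborel" for i
    by (cases "i \<in> S") (auto simp: measurable_ident_sets)
  have d: "distr (gauss s) lborel (if i \<in> S then (\<lambda>y. y) else (\<lambda>_. 0::real)) =
        (if i \<in> S then gauss s else return lborel 0)" for i
    by (cases "i \<in> S") (auto simp: distr_id2 prob_space.distr_const[OF gauss_prob[OF s]])
  show ?thesis
    unfolding gauss_vec_def
    by (subst distr_PiM_fun[OF _ gauss_prob[OF s] m]) (simp_all add: d)
qed

lemma meas_Max: "(\<lambda>x::nat\<Rightarrow>real. Max (x ` {..<n})) \<in> borel_measurable (PiM {..<n} (\<lambda>_. lborel))"
  by measurable

lemma exp_max_HH:
  assumes s: "0 < s"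
  shows "exp_max n s S = (\<integral>x. HH n S x \<partial>PiM {..<n} (\<lambda>_. gauss s))"
proof -
  have "exp_max n s S = (\<integral>x. Max ((\<lambda>i\<in>{..<n}. (if i \<in> S then (\<lambda>y. y) else (\<lambda>_. 0::real)) (x i)) ` {..<n})
     \<partial>PiM {..<n} (\<lambda>_. gauss s))"
    unfolding exp_max_def gauss_vec_distr[OF s]
  proof (rule integral_distr)
    show "(\<lambda>x. \<lambda>i\<in>{..<n}. (if i \<in> S then (\<lambda>y. y) else (\<lambda>_. 0::real)) (x i))
      \<in> PiM {..<n} (\<lambda>_. gauss s) \<rightarrow>\<^sub>M PiM {..<n} (\<lambda>_. lborel)"
    proof (rule measurable_restrict)
      fix i assume "i \<in> {..<n}"
      show "(\<lambda>x. (if i \<in> S then (\<lambda>y. y) else (\<lambda>_. 0::real)) (x i)) \<in> PiM {..<n} (\<lambda>_. gauss s) \<rightarrow>\<^sub>M lborel"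
        using measurable_compose[OF measurable_component_singleton[of i "{..<n}" "\<lambda>_. gauss s"], of "\<lambda>y. y" lborel] \<open>i \<in> {..<n}\<close>
        by (cases "i \<in> S") (simp_all add: measurable_ident_sets)
    qed
    show "(\<lambda>x::nat\<Rightarrow>real. Max (x ` {..<n})) \<in> borel_measurable (PiM {..<n} (\<lambda>_. lborel))"
      by (rule meas_Max)
  qed
  also have "\<dots> = (\<integral>x. HH n S x \<partial>PiM {..<n} (\<lambda>_. gauss s))"
    unfolding HH_def by (intro Bochner_Integration.integral_cong refl arg_cong[where f=Max] image_cong) auto
  finally show ?thesis .
qed

lemma integrable_gauss_abs:
  assumes s: "0 < s"
  shows "integrable (gauss s) (\<lambda>x. \<bar>x\<bar>)"
  unfolding gauss_def
proof (subst integrable_density)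
  have "integrable lborel (\<lambda>x. normal_density 0 s x * \<bar>x - 0\<bar>^1)"
    by (rule integrable_normal_moment_abs[OF s])
  then show "integrable lborel (\<lambda>x. normal_density 0 s x *\<^sub>R \<bar>x\<bar>)" by simp
qed (simp_all add: normal_density_nonneg)

lemma integrable_comp_abs:
  assumes "i < n" and s: "0 < s"
  shows "integrable (PiM {..<n} (\<lambda>_. gauss s)) (\<lambda>x. \<bar>x i\<bar>)"
proof -
  have "integrable (distr (PiM {..<n} (\<lambda>_. gauss s)) (gauss s) (\<lambda>\<omega>. \<omega> i)) (\<lambda>x. \<bar>x\<bar>)"
    by (subst distr_PiM_component) (use assms gauss_prob[OF s] integrable_gauss_abs[OF s] in auto)
  then show ?thesis
    by (subst (asm) integrable_distr_eq) (use assms in auto)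
qed

lemma integrable_HH:
  assumes "0 < n" and s: "0 < s"
  shows "integrable (PiM {..<n} (\<lambda>_. gauss s)) (HH n T)"
proof (rule Bochner_Integration.integrable_bound)
  show "integrable (PiM {..<n} (\<lambda>_. gauss s)) (\<lambda>x. \<Sum>i<n. \<bar>x i\<bar>)"
    by (rule Bochner_Integration.integrable_sum) (use integrable_comp_abs[OF _ s] in auto)
  show "HH n T \<in> borel_measurable (PiM {..<n} (\<lambda>_. gauss s))"
    unfolding HH_def by measurable
  show "AE x in PiM {..<n} (\<lambda>_. gauss s). norm (HH n T x) \<le> norm (\<Sum>i<n. \<bar>x i\<bar>)"
  proof (intro AE_I2)
    fix x :: "nat \<Rightarrow> real"
    have "HH n T x \<in> (\<lambda>i. if i \<in> T then x i else 0) ` {..<n}"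
      unfolding HH_def by (rule Max_in) (use assms in auto)
    then obtain k where k: "k < n" "HH n T x = (if k \<in> T then x k else 0)" by auto
    have "\<bar>x k\<bar> \<le> (\<Sum>i<n. \<bar>x i\<bar>)"
      by (rule member_le_sum) (use k in auto)
    moreover have "0 \<le> (\<Sum>i<n. \<bar>x i\<bar>)" by (simp add: sum_nonneg)
    ultimately show "norm (HH n T x) \<le> norm (\<Sum>i<n. \<bar>x i\<bar>)" using k by auto
  qed
qed

theorem lemma6:
  fixes n :: nat and \<sigma>\<^sub>0 :: real
  assumes "\<sigma>\<^sub>0 > 0"
  shows "submodular_on {..<n} (exp_max n \<sigma>\<^sub>0)"
  unfolding submodular_on_def
proof (intro allI impI)
  fix A B x assume AB: "A \<subseteq> B" and BV: "B \<subseteq> {..<n}" and xV: "x \<in> {..<n}" and xB: "x \<notin> B"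
  let ?M = "PiM {..<n} (\<lambda>_. gauss \<sigma>\<^sub>0)"
  have n: "0 < n" using xV by auto
  note I = integrable_HH[OF n assms]
  have "(\<integral>y. HH n (B \<union> {x}) y + HH n A y \<partial>?M) \<le> (\<integral>y. HH n (A \<union> {x}) y + HH n B y \<partial>?M)"
    by (rule integral_mono) (use I HH_pointwise[OF AB BV _ xB] xV in auto)
  then show "exp_max n \<sigma>\<^sub>0 (B \<union> {x}) - exp_max n \<sigma>\<^sub>0 B \<le> exp_max n \<sigma>\<^sub>0 (A \<union> {x}) - exp_max n \<sigma>\<^sub>0 A"
    unfolding exp_max_HH[OF assms] by (simp add: Bochner_Integration.integral_add[OF I I])
qed

end
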